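(* Let $(\mathcal{X},\mathcal{F},\sigma)$ be a probability space with an $\alpha$-homogeneous atomic filtration, $0<\alpha\le1/2$. Let $w\in L^1(\mathcal{X})$, $w\ge0$, and suppose that for a cube $Q_0\in\mathcal{D}$ and a constant $A$ we have $\langle w^*\rangle_{Q_0}\le A\langle w\rangle_{Q_0}$. Let $E\subset Q_0$ be a union of some cubes in $\mathcal{D}(Q_0)=\{K\in\mathcal{D}:K\subset Q_0\}$. Then \[ w(E)\le 2A\,\frac{\ln(2/\alpha)}{\ln(|Q_0|/|E|)}\,w(Q_0), \] where $w(F)=\int_F w\,d\sigma$.
   Context: An atomic filtration on a probability space $(\mathcal{X},\mathcal{F},\sigma)$ is an increasing sequence of $\sigma$-algebras $\mathcal{F}_n\subset\mathcal{F}$, $n\ge0$, with $\mathcal{F}_0=\{\varnothing,\mathcal{X}\}$, $\mathcal{F}$ generated by the $\mathcal{F}_n$, and such that for each $n$ there is a countable collection $\mathcal{D}_n$ of disjoint sets ("cubes") with every set of $\mathcal{F}_n$ a union of sets of $\mathcal{D}_n$. Write $\mathcal{D}=\bigcup_n\mathcal{D}_n$, $|A|=\sigma(A)$, and for $Q\in\mathcal{D}_n$ let $\operatorname{ch}Q=\{R\in\mathcal{D}_{n+1}:R\subset Q\}$. The filtration is $\alpha$-homogeneous if $|Q'|\ge\alpha|Q|$ for every cube $Q$ and every $Q'\in\operatorname{ch}Q$. For $|A|>0$, $\langle f\rangle_A=|A|^{-1}\int_A f$. Let $\mathbf{E}_nf=\sum_{Q\in\mathcal{D}_n}\langle f\rangle_Q\mathbf{1}_Q$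 and $f^*(x)=\sup_{n\ge0}|\mathbf{E}_nf(x)|$ (martingale maximal function). *)

theory Defs
  imports "HOL-Probability.Probability"
begin

definition atomic_filtration ::
  "'a measure \<Rightarrow> (nat \<Rightarrow> 'a set set) \<Rightarrow> (nat \<Rightarrow> 'a set set) \<Rightarrow> bool" where
  "atomic_filtration M F D \<longleftrightarrow>
     (\<forall>n. sigma_algebra (space M) (F n) \<and> F n \<subseteq> sets M) \<and>
     (\<forall>n. F n \<subseteq> F (Suc n)) \<and>
     F 0 = {{}, space M} \<and>
     sets M = sigma_sets (space M) (\<Union>n. F n) \<and>
     (\<forall>n. countable (D n) \<and> disjoint (D n) \<and> D n \<subseteq> F n \<and>
          (\<forall>A\<in>F n. \<exists>S\<subseteq>D n. A = \<Union>S))"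

definition homogeneous :: "'a measure \<Rightarrow> (nat \<Rightarrow> 'a set set) \<Rightarrow> real \<Rightarrow> bool" where
  "homogeneous M D \<alpha> \<longleftrightarrow>
     (\<forall>n. \<forall>Q\<in>D n. \<forall>Q'\<in>D (Suc n). Q' \<subseteq> Q \<longrightarrow> measure M Q' \<ge> \<alpha> * measure M Q)"

definition avg :: "'a measure \<Rightarrow> 'a set \<Rightarrow> ('a \<Rightarrow> real) \<Rightarrow> real" where
  "avg M A f = (LINT x:A|M. f x) / measure M A"

definition cond_exp_n :: "'a measure \<Rightarrow> (nat \<Rightarrow> 'a set set) \<Rightarrow> nat \<Rightarrow> ('a \<Rightarrow> real) \<Rightarrow> 'a \<Rightarrow> real" where
  "cond_exp_n M D n f x = (\<Sum>\<^sub>\<infinity>Q\<in>D n. avg M Q f * indicator Q x)"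

definition maximal_fn :: "'a measure \<Rightarrow> (nat \<Rightarrow> 'a set set) \<Rightarrow> ('a \<Rightarrow> real) \<Rightarrow> 'a \<Rightarrow> ennreal" where
  "maximal_fn M D f x = (SUP n. ennreal \<bar>cond_exp_n M D n f x\<bar>)"

end

theory Submission imports Defs begin

locale cubes =
  fixes M :: "'a measure" and F D :: "nat \<Rightarrow> 'a set set"
  assumes af: "atomic_filtration M F D"
begin

lemma D_sets: "C \<in> D n \<Longrightarrow> C \<in> sets M"
  using af unfolding atomic_filtration_def by blast

lemma D_countable: "countable (D n)"
  using af unfolding atomic_filtration_def by blast

lemma D_disj: "disjoint (D n)"
  using af unfolding atomic_filtration_def by blast

lemma D_space: "C \<in> D n \<Longrightarrow> C \<subseteq> space M"
  using D_sets sets.sets_into_space by blast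

lemma F_mono: "m \<le> n \<Longrightarrow> F m \<subseteq> F n"
  using af unfolding atomic_filtration_def by (metis lift_Suc_mono_le)

lemma F_union: assumes "A \<in> F n" shows "\<exists>S\<subseteq>D n. A = \<Union>S"
proof -
  have "\<forall>A\<in>F n. \<exists>S\<subseteq>D n. A = \<Union>S"
    using af unfolding atomic_filtration_def by blast
  then show ?thesis using assms by (elim ballE) auto
qed

lemma cover: assumes "x \<in> space M" shows "\<exists>C\<in>D n. x \<in> C"
proof -
  have "space M \<in> F 0" using af unfolding atomic_filtration_def by blast
  then have "space M \<in> F n" using F_mono[of 0 n] by blast
  from F_union[OF this] obtain S where "S \<subseteq> D n" "space M = \<Union>S"
    by (elim exE conjE)
  then show ?thesis using assms by blast
qed

lemma uniq: "C1 \<in> D n \<Longrightarrow> C2 \<in> D n \<Longrightarrow> x \<in> C1 \<Longrightarrow> x \<in> C2 \<Longrightarrow> C1 = C2"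
  using D_disj[of n] disjointD by blast

lemma nest1: assumes "C \<in> D (Suc m)" "C' \<in> D m" "x \<in> C" "x \<in> C'" shows "C \<subseteq> C'"
proof -
  have "D m \<subseteq> F m" using af unfolding atomic_filtration_def by blast
  then have C'F: "C' \<in> F (Suc m)" using assms(2) F_mono[of m "Suc m"] by auto
  have "\<forall>A\<in>F (Suc m). \<exists>S\<subseteq>D (Suc m). A = \<Union>S"
    using af unfolding atomic_filtration_def by blast
  from bspec[OF this C'F] obtain S where "S \<subseteq> D (Suc m)" "C' = \<Union>S" by (elim exE conjE)
  then obtain C'' where "C'' \<in> S" "x \<in> C''" using assms by auto
  then have "C = C''" using uniq assms \<open>S \<subseteq> D (Suc m)\<close> by blast
  then show ?thesis using \<open>C'' \<in> S\<close> \<open>C' = \<Union>S\<close> by auto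
qed

lemma nest: assumes "m \<le> n" "C \<in> D n" "C' \<in> D m" "x \<in> C" "x \<in> C'" shows "C \<subseteq> C'"
  using assms
proof (induction n arbitrary: C)
  case 0 then show ?case using uniq by auto
next
  case (Suc n)
  show ?case
  proof (cases "m = Suc n")
    case True then show ?thesis using Suc uniq by blast
  next
    case False
    have "x \<in> space M" using Suc D_space by blast
    then obtain P where P: "P \<in> D n" "x \<in> P" using cover by blast
    have "C \<subseteq> P" using nest1 Suc P by blast
    moreover have "P \<subseteq> C'" using Suc P False by auto
    ultimately show ?thesis by auto
  qed
qed

lemma cond_exp_at: assumes "C \<in> D n" "x \<in> C" shows "cond_exp_n M D n f x = avg M C f"
proof -
  have "cond_exp_n M D n f x = (\<Sum>\<^sub>\<infinity>Q\<in>{C}. avg M Q f * indicator Q x)"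
    unfolding cond_exp_n_def
    by (rule infsum_cong_neutral) (use assms uniq in \<open>auto simp: indicator_def\<close>)
  then show ?thesis using assms by simp
qed

lemma cond_exp_meas: "cond_exp_n M D n f \<in> borel_measurable M"
proof (rule measurableI)
  fix B :: "real set" assume "B \<in> sets borel"
  have eq: "cond_exp_n M D n f -` B \<inter> space M = \<Union>{C \<in> D n. avg M C f \<in> B}"
  proof (intro equalityI subsetI)
    fix x assume "x \<in> cond_exp_n M D n f -` B \<inter> space M"
    then have "x \<in> space M" "cond_exp_n M D n f x \<in> B" by auto
    then obtain C where "C \<in> D n" "x \<in> C" using cover by blast
    then show "x \<in> \<Union>{C \<in> D n. avg M C f \<in> B}"
      using cond_exp_at \<open>cond_exp_n M D n f x \<in> B\<close> by auto
  next
    fix x assume "x \<in> \<Union>{C \<in> D n. avg M C f \<in> B}"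
    then obtain C where "x \<in> C" "C \<in> D n" "avg M C f \<in> B" by auto
    then show "x \<in> cond_exp_n M D n f -` B \<inter> space M" using cond_exp_at D_space by blast
  qed
  show "cond_exp_n M D n f -` B \<inter> space M \<in> sets M"
    unfolding eq
    by (rule sets.countable_Union) (use D_countable D_sets in \<open>auto intro: countable_subset\<close>)
qed auto

lemma maximal_meas: "maximal_fn M D f \<in> borel_measurable M"
  unfolding maximal_fn_def using cond_exp_meas by measurable

lemma maximal_ge: assumes "C \<in> D n" "x \<in> C" shows "ennreal \<bar>avg M C f\<bar> \<le> maximal_fn M D f x"
  unfolding maximal_fn_def using cond_exp_at[OF assms, of f, symmetric]
  by (auto intro: SUP_upper2)

lemma LU:
  fixes N1 N2 :: "'a measure" and X :: "'i \<Rightarrow> 'a set"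
  assumes "countable I" "\<And>i. i \<in> I \<Longrightarrow> X i \<in> sets M" "disjoint_family_on X I"
    "Y1 \<in> sets M" "Y2 \<in> sets M" "sets N1 = sets M" "sets N2 = sets M"
    "\<And>i. i \<in> I \<Longrightarrow> c * emeasure N2 (X i \<inter> Y2) \<le> emeasure N1 (X i \<inter> Y1)"
  shows "c * emeasure N2 ((\<Union>i\<in>I. X i) \<inter> Y2) \<le> emeasure N1 ((\<Union>i\<in>I. X i) \<inter> Y1)"
proof -
  have e: "(\<Union>i\<in>I. X i) \<inter> Y = (\<Union>i\<in>I. X i \<inter> Y)" for Y by auto
  have d: "disjoint_family_on (\<lambda>i. X i \<inter> Y) I" for Y
    using assms(3) unfolding disjoint_family_on_def by auto
  have m1: "emeasure N1 ((\<Union>i\<in>I. X i) \<inter> Y1) = (\<integral>\<^sup>+i. emeasure N1 (X i \<inter> Y1) \<partial>count_space I)"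
    unfolding e by (rule emeasure_UN_countable) (use assms d in auto)
  have m2: "emeasure N2 ((\<Union>i\<in>I. X i) \<inter> Y2) = (\<integral>\<^sup>+i. emeasure N2 (X i \<inter> Y2) \<partial>count_space I)"
    unfolding e by (rule emeasure_UN_countable) (use assms d in auto)
  show ?thesis unfolding m1 m2
    by (subst nn_integral_cmult[symmetric]) (auto intro!: nn_integral_mono assms(8))
qed

end

lemma en_le1: "0 \<le> a \<Longrightarrow> 0 \<le> b \<Longrightarrow> 0 \<le> c \<Longrightarrow> ennreal a * ennreal b \<le> ennreal c \<Longrightarrow> a * b \<le> c"
  by (metis ennreal_le_iff ennreal_mult)

lemma en_le2: "0 \<le> a \<Longrightarrow> 0 \<le> b \<Longrightarrow> a * b \<le> c \<Longrightarrow> ennreal a * ennreal b \<le> ennreal c"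
  by (metis ennreal_leI ennreal_mult)

lemma numeric:
  fixes b s :: real
  assumes b: "0 < b" and s: "0 < s" "s \<le> b" and eb: "exp (- b) \<le> 1/4"
  shows "s \<le> 2 * b * (1 - exp (- s))"
proof -
  define l where "l = s / b"
  have l: "0 \<le> l" "l \<le> 1" unfolding l_def using b s by auto
  have "exp ((1 - l) *\<^sub>R 0 + l *\<^sub>R (- b)) \<le> (1 - l) * exp 0 + l * exp (- b)"
    by (rule convex_onD[OF exp_convex]) (use l in auto)
  moreover have "(1 - l) *\<^sub>R 0 + l *\<^sub>R (- b) = - s" unfolding l_def using b by simp
  ultimately have "exp (- s) \<le> 1 - l + l * exp (- b)" by simp
  also have "\<dots> \<le> 1 - l + l * (1/4)" using eb l by (intro add_left_mono mult_left_mono) auto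
  finally have "exp (- s) \<le> 1 - 3/4 * l" by simp
  then have "2 * b * (3/4 * l) \<le> 2 * b * (1 - exp (- s))" using b by (intro mult_left_mono) auto
  moreover have "2 * b * (3/4 * l) = 3/2 * s" unfolding l_def using b by simp
  ultimately show ?thesis using s by linarith
qed

locale setting = cubes M F D
  for M :: "'a measure" and F D +
  fixes \<alpha> :: real and w :: "'a \<Rightarrow> real" and Q0 E :: "'a set" and n0 :: nat
  assumes ps: "prob_space M" and hom: "homogeneous M D \<alpha>"
    and apos: "0 < \<alpha>" and ahalf: "\<alpha> \<le> 1/2"
    and wint: "integrable M w" and wpos: "\<forall>x\<in>space M. 0 \<le> w x"
    and Q0D: "Q0 \<in> D n0" and EQ0: "E \<subseteq> Q0" and Esets: "E \<in> sets M"
    and Ecubes: "\<forall>x\<in>E. \<exists>k K. K \<in> D k \<and> x \<in> K \<and> K \<subseteq> E"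
begin

definition "\<beta> = \<alpha> / 2"

lemma bpos: "0 < \<beta>" and bq: "\<beta> \<le> 1/4"
  using apos ahalf unfolding \<beta>_def by auto

lemma bpow_pos: "0 < \<beta> ^ i" using bpos by simp

lemma bpow_mono: "i \<le> j \<Longrightarrow> \<beta> ^ j \<le> \<beta> ^ i"
  using bpos bq by (intro power_decreasing) auto

lemma fm: "finite_measure M" using ps by (simp add: prob_space_def)

lemma em: "emeasure M A = ennreal (measure M A)"
  using finite_measure.emeasure_eq_measure[OF fm] .

lemma mmono: "A \<subseteq> B \<Longrightarrow> B \<in> sets M \<Longrightarrow> measure M A \<le> measure M B"
  using finite_measure.finite_measure_mono[OF fm] by blast

definition T :: "nat \<Rightarrow> nat \<Rightarrow> 'a set set" where
  "T i n = {C \<in> D n. C \<noteq> {} \<and> C \<subseteq> Q0 \<and> n0 \<le> n \<and>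
      \<beta> ^ i * measure M C \<le> measure M (C \<inter> E) \<and>
      (\<forall>m. \<forall>C'\<in>D m. n0 \<le> m \<longrightarrow> m < n \<longrightarrow> C \<subseteq> C' \<longrightarrow>
          measure M (C' \<inter> E) < \<beta> ^ i * measure M C')}"

definition "S i n = \<Union>(T i n)"
definition "G i = (\<Union>n. S i n)"

lemma T_D: "T i n \<subseteq> D n" unfolding T_def by blast

lemma T_sets: "C \<in> T i n \<Longrightarrow> C \<in> sets M" using T_D D_sets by blast

lemma S_sets: "S i n \<in> sets M"
  unfolding S_def
  by (rule sets.countable_Union) (use countable_subset[OF T_D D_countable] T_sets in auto)

lemma G_sets: "G i \<in> sets M"
  unfolding G_def using S_sets by blast

lemma T_Q0: "C \<in> T i n \<Longrightarrow> C \<subseteq> Q0" unfolding T_def by blast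

lemma G_Q0: "G i \<subseteq> Q0" unfolding G_def S_def using T_Q0 by blast

lemma S_disj: "disjoint_family (S i)"
  unfolding disjoint_family_on_def
proof (intro ballI impI)
  have *: False if "n1 < n2" "C1 \<in> T i n1" "C2 \<in> T i n2" "x \<in> C1" "x \<in> C2" for n1 n2 C1 C2 x
  proof -
    have C1: "C1 \<in> D n1" "\<beta> ^ i * measure M C1 \<le> measure M (C1 \<inter> E)" "n0 \<le> n1"
      using that(2) unfolding T_def by blast+
    have "C2 \<subseteq> C1" using nest[of n1 n2 C2 C1 x] that C1 T_D by auto
    moreover have "\<forall>m. \<forall>C'\<in>D m. n0 \<le> m \<longrightarrow> m < n2 \<longrightarrow> C2 \<subseteq> C' \<longrightarrow>
          measure M (C' \<inter> E) < \<beta> ^ i * measure M C'" using that(3) unfolding T_def by blast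
    ultimately have "measure M (C1 \<inter> E) < \<beta> ^ i * measure M C1"
      using that(1) C1 by blast
    then show False using C1 by linarith
  qed
  fix n1 n2 :: nat assume "n1 \<noteq> n2"
  show "S i n1 \<inter> S i n2 = {}"
  proof (rule ccontr)
    assume "S i n1 \<inter> S i n2 \<noteq> {}"
    then obtain x C1 C2 where "C1 \<in> T i n1" "C2 \<in> T i n2" "x \<in> C1" "x \<in> C2"
      unfolding S_def by blast
    then show False using * \<open>n1 \<noteq> n2\<close> by (metis linorder_neqE_nat)
  qed
qed

lemma to_G:
  assumes "x \<in> Q0" "n0 \<le> n" "C \<in> D n" "x \<in> C" "\<beta> ^ i * measure M C \<le> measure M (C \<inter> E)"
  shows "x \<in> G i"
proof -
  define P where "P m \<longleftrightarrow> n0 \<le> m \<and> (\<exists>C'\<in>D m. x \<in> C' \<and> \<beta> ^ i * measure M C' \<le> measure M (C' \<inter> E))" for m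
  have "P n" using assms unfolding P_def by blast
  define m where "m = (LEAST m. P m)"
  have Pm: "P m" unfolding m_def by (rule LeastI[of P n]) fact
  then obtain C' where C': "C' \<in> D m" "x \<in> C'" "\<beta> ^ i * measure M C' \<le> measure M (C' \<inter> E)"
    and "n0 \<le> m" unfolding P_def by blast
  have "C' \<subseteq> Q0" using nest[of n0 m C' Q0 x] C' Q0D assms(1) \<open>n0 \<le> m\<close> by blast
  have "C' \<in> T i m"
    unfolding T_def
  proof (intro CollectI conjI allI ballI impI)
    fix m' C'' assume h: "C'' \<in> D m'" "n0 \<le> m'" "m' < m" "C' \<subseteq> C''"
    show "measure M (C'' \<inter> E) < \<beta> ^ i * measure M C''"
    proof (rule ccontr)
      assume "\<not> ?thesis"
      then have "P m'" unfolding P_def using h C' by auto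
      then have "m \<le> m'" unfolding m_def by (rule Least_le)
      then show False using h by simp
    qed
  qed (use C' \<open>C' \<subseteq> Q0\<close> \<open>n0 \<le> m\<close> in auto)
  then show "x \<in> G i" unfolding G_def S_def using C' by blast
qed

lemma G_mono: assumes "i \<le> j" shows "G i \<subseteq> G j"
proof
  fix x assume "x \<in> G i"
  then obtain n C where C: "C \<in> T i n" "x \<in> C" unfolding G_def S_def by blast
  then have C2: "C \<in> D n" "n0 \<le> n" "C \<subseteq> Q0" "\<beta> ^ i * measure M C \<le> measure M (C \<inter> E)"
    unfolding T_def by blast+
  have "\<beta> ^ j * measure M C \<le> \<beta> ^ i * measure M C"
    using bpow_mono[OF assms] by (intro mult_right_mono) auto
  then show "x \<in> G j" using to_G[of x n C j] C C2 by auto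
qed

lemma E_G: "E \<subseteq> G 0"
proof
  fix x assume "x \<in> E"
  then obtain k K where K: "K \<in> D k" "x \<in> K" "K \<subseteq> E" using Ecubes by blast
  have xQ: "x \<in> Q0" using \<open>x \<in> E\<close> EQ0 by blast
  have xs: "x \<in> space M" using K D_space by blast
  obtain C where C: "C \<in> D (max k n0)" "x \<in> C" using cover[OF xs] by blast
  have "C \<subseteq> E"
  proof (cases "k \<le> n0")
    case True
    then have "C = Q0" using C uniq[of C n0 Q0 x] Q0D xQ by (simp add: max_def)
    moreover have "Q0 \<subseteq> K" using nest[of k n0 Q0 K x] True Q0D K xQ by blast
    ultimately show ?thesis using K by blast
  next
    case False
    then have "C = K" using C uniq[of C k K x] K by (simp add: max_def)
    then show ?thesis using K by blast
  qed
  then have "C \<inter> E = C" by blast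
  then show "x \<in> G 0" using to_G[of x "max k n0" C 0] C xQ by simp
qed


lemma cube_pos: "C \<in> D n \<Longrightarrow> C \<noteq> {} \<Longrightarrow> 0 < measure M C"
proof (induction n arbitrary: C)
  case 0
  have "D 0 \<subseteq> F 0" "F 0 = {{}, space M}" using af unfolding atomic_filtration_def by blast+
  then have "C = space M" using 0 by blast
  then show ?case using prob_space.prob_space[OF ps] by simp
next
  case (Suc n)
  then obtain x where x: "x \<in> C" by blast
  then have "x \<in> space M" using Suc.prems D_space by blast
  then obtain P where P: "P \<in> D n" "x \<in> P" using cover by blast
  have "C \<subseteq> P" using nest1[OF Suc.prems(1) P(1) x P(2)] .
  have "\<alpha> * measure M P \<le> measure M C"
    using hom P(1) Suc.prems(1) \<open>C \<subseteq> P\<close> unfolding homogeneous_def by blast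
  moreover have "0 < measure M P" using Suc.IH P by blast
  ultimately show ?case using apos by (smt (verit) mult_pos_pos)
qed

lemma LU_T:
  assumes "Y1 \<in> sets M" "Y2 \<in> sets M" "sets N1 = sets M" "sets N2 = sets M"
    "\<And>C. C \<in> T i n \<Longrightarrow> c * emeasure N2 (C \<inter> Y2) \<le> emeasure N1 (C \<inter> Y1)"
  shows "c * emeasure N2 (S i n \<inter> Y2) \<le> emeasure N1 (S i n \<inter> Y1)"
proof -
  have d: "disjoint_family_on (\<lambda>C. C) (T i n)"
    unfolding disjoint_family_on_def using D_disj[of n] T_D disjointD by blast
  have "c * emeasure N2 ((\<Union>C\<in>T i n. C) \<inter> Y2) \<le> emeasure N1 ((\<Union>C\<in>T i n. C) \<inter> Y1)"
    by (rule LU[where I="T i n" and X="\<lambda>C. C"])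
       (use countable_subset[OF T_D D_countable] T_sets d assms in auto)
  then show ?thesis unfolding S_def by simp
qed

lemma LU_G:
  assumes "Y1 \<in> sets M" "Y2 \<in> sets M" "sets N1 = sets M" "sets N2 = sets M"
    "\<And>n. c * emeasure N2 (S i n \<inter> Y2) \<le> emeasure N1 (S i n \<inter> Y1)"
  shows "c * emeasure N2 (G i \<inter> Y2) \<le> emeasure N1 (G i \<inter> Y1)"
proof -
  have "c * emeasure N2 ((\<Union>n\<in>UNIV. S i n) \<inter> Y2) \<le> emeasure N1 ((\<Union>n\<in>UNIV. S i n) \<inter> Y1)"
    by (rule LU[where I="UNIV" and X="S i"])
       (use S_sets S_disj assms in auto)
  then show ?thesis unfolding G_def by simp
qed

lemma weak_global: "\<beta> ^ i * measure M (G i) \<le> measure M E"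
proof -
  have "ennreal (\<beta> ^ i) * emeasure M (G i \<inter> space M) \<le> emeasure M (G i \<inter> E)"
  proof (rule LU_G[OF Esets sets.top refl refl], rule LU_T[OF Esets sets.top refl refl])
    fix n C assume C: "C \<in> T i n"
    then have "C \<inter> space M = C" using T_sets sets.sets_into_space by blast
    moreover have "\<beta> ^ i * measure M C \<le> measure M (C \<inter> E)" using C unfolding T_def by blast
    ultimately show "ennreal (\<beta> ^ i) * emeasure M (C \<inter> space M) \<le> emeasure M (C \<inter> E)"
      using bpow_pos[of i] by (simp add: em ennreal_mult[symmetric])
  qed
  moreover have "G i \<inter> space M = G i" using G_sets sets.sets_into_space by blast
  ultimately have "ennreal (\<beta> ^ i) * ennreal (measure M (G i)) \<le> ennreal (measure M (G i \<inter> E))"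
    by (simp only: em)
  then have "\<beta> ^ i * measure M (G i) \<le> measure M (G i \<inter> E)"
    by (rule en_le1[OF less_imp_le[OF bpow_pos] measure_nonneg measure_nonneg])
  also have "\<dots> \<le> measure M E" by (rule mmono[OF Int_lower2 Esets])
  finally show ?thesis .
qed

lemma T_level: assumes "C \<in> T j n" "measure M E < \<beta> ^ j * measure M Q0" shows "n0 < n"
proof (rule ccontr)
  assume "\<not> n0 < n"
  moreover have C: "C \<in> D n" "C \<noteq> {}" "C \<subseteq> Q0" "n0 \<le> n" "\<beta> ^ j * measure M C \<le> measure M (C \<inter> E)"
    using assms(1) unfolding T_def by blast+
  ultimately have "n = n0" by simp
  obtain x where "x \<in> C" using C by blast
  then have "C = Q0" using uniq[of C n0 Q0 x] C Q0D \<open>n = n0\<close> by blast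
  then have "C \<inter> E = E" using EQ0 by blast
  then show False using C assms(2) \<open>C = Q0\<close> by simp
qed

lemma weak_local:
  assumes j: "1 \<le> j" and C: "C \<in> T j n" and n: "n0 < n"
  shows "measure M (C \<inter> G (j-1)) \<le> measure M C / 2"
proof -
  have C1: "C \<in> D n" "C \<noteq> {}" "C \<subseteq> Q0"
    using C unfolding T_def by blast+
  have Ccond: "\<forall>m. \<forall>C'\<in>D m. n0 \<le> m \<longrightarrow> m < n \<longrightarrow> C \<subseteq> C' \<longrightarrow>
          measure M (C' \<inter> E) < \<beta> ^ j * measure M C'"
    using C unfolding T_def by blast
  obtain x where x: "x \<in> C" using C1 by blast
  then have "x \<in> space M" using C1 D_space by blast
  then obtain P where P: "P \<in> D (n-1)" "x \<in> P" using cover by blast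
  have Sn: "Suc (n-1) = n" using n by simp
  have CP: "C \<subseteq> P" using nest[of "n-1" n C P x] P C1 x by auto
  have hP: "\<alpha> * measure M P \<le> measure M C"
    using hom P(1) C1(1) CP Sn unfolding homogeneous_def by metis
  have PE: "measure M (P \<inter> E) < \<beta> ^ j * measure M P"
  proof -
    have "n0 \<le> n - 1" "n - 1 < n" using n by auto
    then show ?thesis using Ccond P(1) CP by blast
  qed
  have CE: "measure M (C \<inter> E) \<le> measure M (P \<inter> E)"
    using mmono[of "C \<inter> E" "P \<inter> E"] CP D_sets[OF P(1)] Esets by blast
  have CES: "C \<inter> E \<in> sets M" using D_sets[OF C1(1)] Esets by blast
  have cube: "ennreal (\<beta> ^ (j-1)) * emeasure M (C'' \<inter> C) \<le> emeasure M (C'' \<inter> (C \<inter> E))"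
    if C'': "C'' \<in> T (j-1) n'" for n' C''
  proof (cases "C'' \<inter> C = {}")
    case True then show ?thesis by simp
  next
    case False
    then obtain y where y: "y \<in> C''" "y \<in> C" by blast
    have C''1: "C'' \<in> D n'" "n0 \<le> n'" "\<beta> ^ (j-1) * measure M C'' \<le> measure M (C'' \<inter> E)"
      using C'' unfolding T_def by blast+
    show ?thesis
    proof (cases "n \<le> n'")
      case True
      then have "C'' \<subseteq> C" using nest[of n n' C'' C y] C''1 C1 y by blast
      then have "C'' \<inter> C = C''" "C'' \<inter> (C \<inter> E) = C'' \<inter> E" by blast+
      then show ?thesis using C''1 bpow_pos[of "j-1"] by (simp add: em ennreal_mult[symmetric])
    next
      case False
      then have "C \<subseteq> C''" using nest[of n' n C C'' y] C''1 C1 y by auto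
      then have "measure M (C'' \<inter> E) < \<beta> ^ j * measure M C''"
        using Ccond C''1 False by auto
      moreover have "\<beta> ^ j * measure M C'' \<le> \<beta> ^ (j-1) * measure M C''"
        using bpow_mono[of "j-1" j] by (intro mult_right_mono) auto
      ultimately show ?thesis using C''1 by linarith
    qed
  qed
  have "ennreal (\<beta> ^ (j-1)) * emeasure M (G (j-1) \<inter> C) \<le> emeasure M (G (j-1) \<inter> (C \<inter> E))"
    by (rule LU_G[OF CES D_sets[OF C1(1)] refl refl], rule LU_T[OF CES D_sets[OF C1(1)] refl refl])
       (rule cube)
  then have "\<beta> ^ (j-1) * measure M (G (j-1) \<inter> C) \<le> measure M (G (j-1) \<inter> (C \<inter> E))"
    unfolding em by (rule en_le1[OF less_imp_le[OF bpow_pos] measure_nonneg measure_nonneg])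
  also have "\<dots> \<le> measure M (C \<inter> E)" by (rule mmono[OF Int_lower2 CES])
  finally have A1: "\<beta> ^ (j-1) * measure M (C \<inter> G (j-1)) \<le> measure M (C \<inter> E)"
    by (simp add: Int_commute)
  have bj: "\<beta> ^ j = \<beta> ^ (j-1) * \<beta>" using j by (cases j) (auto simp: mult.commute)
  have "\<beta> ^ (j-1) * measure M (C \<inter> G (j-1)) < \<beta> ^ (j-1) * (\<beta> * measure M P)"
    using A1 CE PE bj by (simp add: mult.assoc)
  then have "measure M (C \<inter> G (j-1)) < \<beta> * measure M P"
    using bpow_pos[of "j-1"] by (simp add: mult_less_cancel_left_pos)
  also have "\<beta> * measure M P \<le> measure M C / 2" using hP unfolding \<beta>_def by simp
  finally show ?thesis by simp
qed

definition "W = density M (\<lambda>x. ennreal (w x))"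
definition "V = density M (maximal_fn M D w)"

lemma sets_W: "sets W = sets M" unfolding W_def by simp
lemma sets_V: "sets V = sets M" unfolding V_def by simp

lemma W_eq: assumes X: "X \<in> sets M" shows "emeasure W X = ennreal (LINT x:X|M. w x)"
proof -
  have wm: "(\<lambda>x. ennreal (w x)) \<in> borel_measurable M" using wint by measurable
  have "emeasure W X = (\<integral>\<^sup>+x. ennreal (w x) * indicator X x \<partial>M)"
    unfolding W_def by (rule emeasure_density[OF wm X])
  also have "\<dots> = (\<integral>\<^sup>+x. ennreal (indicator X x *\<^sub>R w x) \<partial>M)"
    by (rule nn_integral_cong) (simp split: split_indicator)
  also have "\<dots> = ennreal (integral\<^sup>L M (\<lambda>x. indicator X x *\<^sub>R w x))"
    by (rule nn_integral_eq_integral)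
       (use integrable_mult_indicator[OF X wint] wpos in \<open>auto intro!: AE_I2 split: split_indicator\<close>)
  finally show ?thesis by (simp add: set_lebesgue_integral_def)
qed

lemma int_nonneg: "0 \<le> (LINT x:X|M. w x)"
  unfolding set_lebesgue_integral_def
  by (rule integral_nonneg_AE) (use wpos in \<open>auto intro!: AE_I2 split: split_indicator\<close>)

lemma avg_nonneg: "0 \<le> avg M X w"
  unfolding avg_def using int_nonneg by simp


lemma piece: assumes j: "1 \<le> j" and C: "C \<in> T j n" and n: "n0 < n"
  shows "ennreal (1/2) * emeasure W (C \<inter> space M) \<le> emeasure V (C \<inter> (space M - G (j-1)))"
proof -
  have CD: "C \<in> D n" "C \<noteq> {}" using C unfolding T_def by blast+
  have Cs: "C \<in> sets M" using D_sets CD by blast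
  have Csp: "C \<inter> space M = C" using Cs sets.sets_into_space by blast
  define X where "X = C \<inter> (space M - G (j-1))"
  have Xs: "X \<in> sets M" unfolding X_def by (intro sets.Int sets.Diff sets.top Cs G_sets)
  have XC: "X = C - C \<inter> G (j-1)" unfolding X_def using Csp by blast
  have muX: "measure M X = measure M C - measure M (C \<inter> G (j-1))"
    unfolding XC by (rule finite_measure.finite_measure_Diff[OF fm Cs]) (auto intro: sets.Int Cs G_sets)
  have muX2: "measure M C / 2 \<le> measure M X" using muX weak_local[OF j C n] by linarith
  have mC: "0 < measure M C" using cube_pos CD by blast
  have a0: "0 \<le> avg M C w" by (rule avg_nonneg)
  have intC: "(LINT x:C|M. w x) = avg M C w * measure M C"
    unfolding avg_def using mC by simp
  have "ennreal (1/2) * emeasure W (C \<inter> space M) = ennreal (1/2) * ennreal (avg M C w * measure M C)"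
    unfolding Csp W_eq[OF Cs] intC ..
  also have "\<dots> = ennreal (avg M C w * (measure M C / 2))"
    by (subst ennreal_mult[symmetric]) (use a0 in auto)
  also have "\<dots> \<le> ennreal (avg M C w * measure M X)"
    by (rule ennreal_leI) (rule mult_left_mono[OF muX2 a0])
  also have "\<dots> = ennreal (avg M C w) * emeasure M X"
    unfolding em by (rule ennreal_mult[OF a0 measure_nonneg])
  also have "\<dots> = (\<integral>\<^sup>+x. ennreal (avg M C w) * indicator X x \<partial>M)"
    by (rule nn_integral_cmult_indicator[OF Xs, symmetric])
  also have "\<dots> \<le> (\<integral>\<^sup>+x. maximal_fn M D w x * indicator X x \<partial>M)"
  proof (rule nn_integral_mono)
    fix x
    show "ennreal (avg M C w) * indicator X x \<le> maximal_fn M D w x * indicator X x"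
    proof (cases "x \<in> X")
      case True
      then have "x \<in> C" unfolding X_def by blast
      then have "ennreal \<bar>avg M C w\<bar> \<le> maximal_fn M D w x" by (rule maximal_ge[OF CD(1)])
      then show ?thesis using True a0 by simp
    qed simp
  qed
  also have "\<dots> = emeasure V X"
    unfolding V_def by (rule emeasure_density[OF maximal_meas Xs, symmetric])
  finally show ?thesis unfolding X_def .
qed

lemma piece_G: assumes j: "1 \<le> j" and lev: "measure M E < \<beta> ^ j * measure M Q0"
  shows "ennreal (1/2) * emeasure W (G j \<inter> space M) \<le> emeasure V (G j \<inter> (space M - G (j-1)))"
proof -
  have Ys: "space M - G (j-1) \<in> sets M" by (intro sets.Diff sets.top G_sets)
  show ?thesis
  proof (rule LU_G[OF Ys sets.top sets_V sets_W], rule LU_T[OF Ys sets.top sets_V sets_W])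
    fix n C assume C: "C \<in> T j n"
    show "ennreal (1/2) * emeasure W (C \<inter> space M) \<le> emeasure V (C \<inter> (space M - G (j-1)))"
      by (rule piece[OF j C T_level[OF C lev]])
  qed
qed


lemma lowV: assumes CD: "C \<in> D n" and Xs: "X \<in> sets M" and XC: "X \<subseteq> C"
  shows "ennreal (avg M C w) * emeasure M X \<le> emeasure V X"
proof -
  have a0: "0 \<le> avg M C w" by (rule avg_nonneg)
  have "ennreal (avg M C w) * emeasure M X = (\<integral>\<^sup>+x. ennreal (avg M C w) * indicator X x \<partial>M)"
    by (rule nn_integral_cmult_indicator[OF Xs, symmetric])
  also have "\<dots> \<le> (\<integral>\<^sup>+x. maximal_fn M D w x * indicator X x \<partial>M)"
  proof (rule nn_integral_mono)
    fix x
    show "ennreal (avg M C w) * indicator X x \<le> maximal_fn M D w x * indicator X x"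
    proof (cases "x \<in> X")
      case True
      then have "x \<in> C" using XC by blast
      then have "ennreal \<bar>avg M C w\<bar> \<le> maximal_fn M D w x" by (rule maximal_ge[OF CD])
      then show ?thesis using True a0 by simp
    qed simp
  qed
  also have "\<dots> = emeasure V X"
    unfolding V_def by (rule emeasure_density[OF maximal_meas Xs, symmetric])
  finally show ?thesis .
qed

lemma Q0_sp: "Q0 \<subseteq> space M" using D_space Q0D by blast
lemma Q0_sets: "Q0 \<in> sets M" using D_sets Q0D by blast

theorem main:
  assumes hypV: "emeasure V Q0 \<le> ennreal (A * (LINT x:Q0|M. w x))"
    and mEp: "0 < measure M E" and mEQ: "measure M E < measure M Q0"
  shows "(LINT x:E|M. w x) * ln (measure M Q0 / measure M E) \<le> 2 * A * ln (2/\<alpha>) * (LINT x:Q0|M. w x)"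
proof -
  define mQ where "mQ = measure M Q0"
  define mE where "mE = measure M E"
  define wE where "wE = (LINT x:E|M. w x)"
  define wQ where "wQ = (LINT x:Q0|M. w x)"
  have mQp: "0 < mQ" using mEp mEQ unfolding mQ_def by simp
  have mEp': "0 < mE" and mEQ': "mE < mQ" using mEp mEQ unfolding mE_def mQ_def by auto
  have wE0: "0 \<le> wE" unfolding wE_def by (rule int_nonneg)
  have wQ0: "0 \<le> wQ" unfolding wQ_def by (rule int_nonneg)
  have b1: "\<beta> < 1" using bq by simp
  obtain N where "\<beta> ^ N < mE / mQ" using real_arch_pow_inv[of "mE / mQ" \<beta>] mEp' mQp b1 by auto
  then have "\<beta> ^ N * mQ \<le> mE" using mQp by (simp add: pos_less_divide_eq less_imp_le)
  define m0 where "m0 = (LEAST N. \<beta> ^ N * mQ \<le> mE)"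
  have m0a: "\<beta> ^ m0 * mQ \<le> mE" unfolding m0_def by (rule LeastI) fact
  have "m0 \<noteq> 0" using m0a mEQ' by (cases m0) auto
  define m where "m = m0 - 1"
  have Sm: "Suc m = m0" using \<open>m0 \<noteq> 0\<close> unfolding m_def by simp
  have levm: "mE < \<beta> ^ m * mQ"
  proof (rule ccontr)
    assume "\<not> ?thesis"
    then have "m0 \<le> m" unfolding m0_def by (intro Least_le) simp
    then show False using Sm by simp
  qed
  have levSm: "\<beta> ^ Suc m * mQ \<le> mE" using m0a Sm by simp
  have Esp: "E \<subseteq> space M" using EQ0 Q0_sp by blast
  have WE: "emeasure W E = ennreal wE" unfolding wE_def by (rule W_eq[OF Esets])
  have WQ: "emeasure W Q0 = ennreal wQ" unfolding wQ_def by (rule W_eq[OF Q0_sets])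
  have tele: "k \<le> m \<Longrightarrow> ennreal (real k * wE / 2) + emeasure V (Q0 - G k) \<le> emeasure V (Q0 - G 0)" for k
  proof (induction k)
    case 0 then show ?case by simp
  next
    case (Suc k)
    then have km: "k \<le> m" by simp
    have "\<beta> ^ m * mQ \<le> \<beta> ^ Suc k * mQ"
      using bpow_mono[OF Suc.prems] mQp by (intro mult_right_mono) auto
    then have lev: "measure M E < \<beta> ^ Suc k * measure M Q0" using levm unfolding mE_def mQ_def by simp
    have pg: "ennreal (1/2) * emeasure W (G (Suc k) \<inter> space M) \<le> emeasure V (G (Suc k) \<inter> (space M - G k))"
      using piece_G[OF _ lev] by simp
    have "E \<subseteq> G (Suc k) \<inter> space M" using E_G G_mono[of 0 "Suc k"] Esp by blast
    then have "emeasure W E \<le> emeasure W (G (Suc k) \<inter> space M)"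
      by (intro emeasure_mono) (auto simp: sets_W intro: sets.Int G_sets)
    then have "ennreal (1/2) * ennreal wE \<le> ennreal (1/2) * emeasure W (G (Suc k) \<inter> space M)"
      unfolding WE by (rule mult_left_mono) simp
    moreover have "ennreal (wE / 2) = ennreal (1/2) * ennreal wE"
      by (subst ennreal_mult[symmetric]) (use wE0 in auto)
    ultimately have half: "ennreal (wE / 2) \<le> emeasure V (G (Suc k) \<inter> (space M - G k))"
      using pg by simp
    have GG: "G k \<subseteq> G (Suc k)" by (rule G_mono) simp
    have split: "Q0 - G k = (G (Suc k) \<inter> (space M - G k)) \<union> (Q0 - G (Suc k))"
      using GG G_Q0[of "Suc k"] Q0_sp by blast
    have disj: "(G (Suc k) \<inter> (space M - G k)) \<inter> (Q0 - G (Suc k)) = {}" by blast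
    have pe: "emeasure V (G (Suc k) \<inter> (space M - G k)) + emeasure V (Q0 - G (Suc k)) = emeasure V (Q0 - G k)"
      unfolding split
      by (rule plus_emeasure[OF _ _ disj]) (auto simp: sets_V intro!: sets.Int sets.Diff G_sets Q0_sets)
    have e: "real (Suc k) * wE / 2 = real k * wE / 2 + wE / 2" by (simp add: field_simps)
    have "ennreal (real (Suc k) * wE / 2) = ennreal (real k * wE / 2) + ennreal (wE / 2)"
      unfolding e by (rule ennreal_plus) (use wE0 in auto)
    then have "ennreal (real (Suc k) * wE / 2) + emeasure V (Q0 - G (Suc k))
        = ennreal (real k * wE / 2) + (ennreal (wE / 2) + emeasure V (Q0 - G (Suc k)))"
      by (simp add: add.assoc)
    also have "\<dots> \<le> ennreal (real k * wE / 2) + emeasure V (Q0 - G k)"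
      using half pe by (intro add_left_mono) (metis add_right_mono)
    also have "\<dots> \<le> emeasure V (Q0 - G 0)" by (rule Suc.IH[OF km])
    finally show ?case .
  qed
  have Gms: "G m \<in> sets M" by (rule G_sets)
  have muD: "measure M (Q0 - G m) = mQ - measure M (G m)"
    unfolding mQ_def by (rule finite_measure.finite_measure_Diff[OF fm Q0_sets Gms G_Q0])
  have last: "ennreal (avg M Q0 w * (mQ - measure M (G m))) \<le> emeasure V (Q0 - G m)"
  proof -
    have "ennreal (avg M Q0 w * (mQ - measure M (G m))) = ennreal (avg M Q0 w) * emeasure M (Q0 - G m)"
      unfolding em muD[symmetric] by (rule ennreal_mult[OF avg_nonneg measure_nonneg])
    also have "\<dots> \<le> emeasure V (Q0 - G m)" by (rule lowV[OF Q0D]) (auto intro: sets.Diff Q0_sets Gms)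
    finally show ?thesis .
  qed
  have "emeasure V (Q0 - G 0) \<le> emeasure V Q0"
    by (rule emeasure_mono) (auto simp: sets_V Q0_sets)
  define x where "x = real m * wE / 2 + avg M Q0 w * (mQ - measure M (G m))"
  have wg: "\<beta> ^ m * measure M (G m) \<le> mE" unfolding mE_def by (rule weak_global)
  have Gm_lt: "measure M (G m) < mQ"
  proof -
    have "\<beta> ^ m * measure M (G m) < \<beta> ^ m * mQ" using wg levm by linarith
    then show ?thesis using bpow_pos[of m] by simp
  qed
  have avgQ: "avg M Q0 w * mQ = wQ" unfolding avg_def mQ_def wQ_def using mQp mQ_def by simp
  have x0: "0 \<le> x" unfolding x_def using wE0 avg_nonneg[of Q0] Gm_lt by simp
  have "ennreal x = ennreal (real m * wE / 2) + ennreal (avg M Q0 w * (mQ - measure M (G m)))"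
    unfolding x_def using wE0 avg_nonneg[of Q0] Gm_lt by (subst ennreal_plus) auto
  also have "\<dots> \<le> ennreal (real m * wE / 2) + emeasure V (Q0 - G m)"
    by (rule add_left_mono[OF last])
  also have "\<dots> \<le> emeasure V (Q0 - G 0)" by (rule tele) simp
  also have "\<dots> \<le> emeasure V Q0" by fact
  also have "\<dots> \<le> ennreal (A * wQ)" using hypV unfolding wQ_def .
  finally have ex: "ennreal x \<le> ennreal (A * wQ)" .
  have xA: "x \<le> A * wQ"
  proof (cases "0 \<le> A * wQ")
    case True then show ?thesis using ex by simp
  next
    case False
    then have "ennreal x = 0" using ex by (simp add: ennreal_neg)
    then have "x = 0" using x0 by simp
    then have "avg M Q0 w * (mQ - measure M (G m)) = 0"
    proof -
      have p1: "0 \<le> real m * wE / 2" using wE0 by simp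
      have p2: "0 \<le> avg M Q0 w * (mQ - measure M (G m))" using avg_nonneg[of Q0] Gm_lt by simp
      show ?thesis using p1 p2 \<open>x = 0\<close> unfolding x_def by linarith
    qed
    then have "avg M Q0 w = 0" using Gm_lt by simp
    then have "wQ = 0" using avgQ by simp
    then show ?thesis using False by simp
  qed
  have wEQ: "wE \<le> wQ"
  proof -
    have "emeasure W E \<le> emeasure W Q0" by (rule emeasure_mono[OF EQ0]) (simp add: sets_W Q0_sets)
    then show ?thesis using WE WQ wQ0 by simp
  qed
  define b where "b = ln (2 / \<alpha>)"
  have 2: "2 / \<alpha> = 1 / \<beta>" unfolding \<beta>_def by simp
  have eb: "exp b = 1 / \<beta>" unfolding b_def 2 using bpos by simp
  have emb: "exp (- b) = \<beta>" using eb by (simp add: exp_minus)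
  have bp: "0 < b" unfolding b_def using apos ahalf by simp
  define t where "t = ln (mQ / mE)"
  define s where "s = t - real m * b"
  define q where "q = exp (- s)"
  have et: "exp (- t) = mE / mQ" unfolding t_def using mQp mEp' by (simp add: exp_minus)
  have "q = exp (real m * b) * exp (- t)" unfolding q_def s_def by (simp add: exp_add[symmetric])
  also have "exp (real m * b) = (1 / \<beta>) ^ m" by (simp add: exp_of_nat_mult eb)
  finally have q_eq: "q * \<beta> ^ m * mQ = mE" using et mQp bpos by (simp add: power_one_over field_simps)
  have q1: "q < 1"
  proof -
    have "q * (\<beta> ^ m * mQ) < 1 * (\<beta> ^ m * mQ)" using q_eq levm by (simp add: mult.assoc)
    then show ?thesis using bpow_pos[of m] mQp by (simp add: mult_less_cancel_right_pos)
  qed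
  have qb: "\<beta> \<le> q"
  proof -
    have e1: "\<beta> * (\<beta> ^ m * mQ) = \<beta> ^ Suc m * mQ" by simp
    have e2: "q * (\<beta> ^ m * mQ) = mE" using q_eq by (simp add: mult.assoc)
    have "\<beta> * (\<beta> ^ m * mQ) \<le> q * (\<beta> ^ m * mQ)" unfolding e1 e2 by (rule levSm)
    then show ?thesis using bpow_pos[of m] mQp by (simp add: mult_le_cancel_right_pos)
  qed
  have s0: "0 < s" using q1 unfolding q_def by simp
  have sb: "s \<le> b" using qb unfolding q_def emb[symmetric] by simp
  have eb4: "exp (- b) \<le> 1/4" using emb bq by simp
  have num: "s \<le> 2 * b * (1 - q)" unfolding q_def by (rule numeric[OF bp s0 sb eb4])
  have tb: "t \<le> 2 * b * (real m / 2 + 1 - q)" using num unfolding s_def by (simp add: algebra_simps)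
  have Gq: "measure M (G m) \<le> q * mQ"
  proof -
    have "\<beta> ^ m * measure M (G m) \<le> \<beta> ^ m * (q * mQ)" using wg q_eq by (simp add: mult_ac)
    then show ?thesis using bpow_pos[of m] by simp
  qed
  have "avg M Q0 w * (mQ - measure M (G m)) \<ge> avg M Q0 w * (mQ - q * mQ)"
    using Gq avg_nonneg[of Q0] by (intro mult_left_mono) auto
  moreover have "avg M Q0 w * (mQ - q * mQ) = wQ * (1 - q)" using avgQ by (simp add: algebra_simps)
  moreover have "wE * (1 - q) \<le> wQ * (1 - q)" using wEQ q1 by (intro mult_right_mono) auto
  ultimately have "wE * (real m / 2 + 1 - q) \<le> x" unfolding x_def by (simp add: algebra_simps)
  then have key: "wE * (real m / 2 + 1 - q) \<le> A * wQ" using xA by linarith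
  have "wE * t \<le> wE * (2 * b * (real m / 2 + 1 - q))" using tb wE0 by (rule mult_left_mono)
  also have "\<dots> = 2 * b * (wE * (real m / 2 + 1 - q))" by simp
  also have "\<dots> \<le> 2 * b * (A * wQ)" using key bp by (intro mult_left_mono) auto
  finally show ?thesis unfolding wE_def t_def mQ_def mE_def b_def wQ_def by (simp add: mult_ac)
qed

end

theorem lemma4p2:
  fixes M :: "'a measure" and F D :: "nat \<Rightarrow> 'a set set"
    and \<alpha> A :: real and w :: "'a \<Rightarrow> real" and Q0 E :: "'a set"
  assumes "prob_space M"
    and "atomic_filtration M F D"
    and "homogeneous M D \<alpha>"
    and "0 < \<alpha>" and "\<alpha> \<le> 1/2"
    and "integrable M w" and "\<forall>x\<in>space M. 0 \<le> w x"
    and "Q0 \<in> (\<Union>n. D n)"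
    and "(\<integral>\<^sup>+ x\<in>Q0. maximal_fn M D w x \<partial>M) / emeasure M Q0 \<le> ennreal (A * avg M Q0 w)"
    and "\<exists>S \<subseteq> {K \<in> (\<Union>n. D n). K \<subseteq> Q0}. E = \<Union>S"
  shows "(LINT x:E|M. w x) * ln (measure M Q0 / measure M E)
           \<le> 2 * A * ln (2 / \<alpha>) * (LINT x:Q0|M. w x)"
proof -
  interpret cubes M F D by unfold_locales (rule assms(2))
  obtain n0 where Q0D: "Q0 \<in> D n0" using assms(8) by blast
  obtain S where S: "S \<subseteq> {K \<in> (\<Union>n. D n). K \<subseteq> Q0}" "E = \<Union>S" using assms(10) by blast
  have EQ0: "E \<subseteq> Q0" using S by blast
  have cS: "countable S"
    by (rule countable_subset[of _ "\<Union>n. D n"]) (use S D_countable in \<open>auto intro: countable_UN\<close>)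
  have Esets: "E \<in> sets M"
    unfolding S(2) by (rule sets.countable_Union[OF cS]) (use S D_sets in blast)
  have Ecubes: "\<forall>x\<in>E. \<exists>k K. K \<in> D k \<and> x \<in> K \<and> K \<subseteq> E"
  proof
    fix x assume "x \<in> E"
    then obtain K where K: "K \<in> S" "x \<in> K" unfolding S(2) by blast
    then have "K \<in> (\<Union>n. D n)" using S(1) by blast
    then obtain k where "K \<in> D k" by blast
    moreover have "K \<subseteq> E" unfolding S(2) using K(1) by blast
    ultimately show "\<exists>k K. K \<in> D k \<and> x \<in> K \<and> K \<subseteq> E" using K(2) by blast
  qed
  interpret setting M F D \<alpha> w Q0 E n0
  proof (rule setting.intro)
    show "cubes M F D" by (rule cubes_axioms)
    show "setting_axioms M D \<alpha> w Q0 E n0"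
      by (rule setting_axioms.intro) (fact assms(1) assms(3) assms(4) assms(5) assms(6) assms(7) Q0D EQ0 Esets Ecubes)+
  qed
  define wQ where "wQ = (LINT x:Q0|M. w x)"
  define wE where "wE = (LINT x:E|M. w x)"
  show ?thesis
  proof (cases "Q0 = {}")
    case True
    then have "E = {}" using EQ0 by blast
    then show ?thesis using True by (simp add: set_lebesgue_integral_def)
  next
    case False
    have mQp: "0 < measure M Q0" using cube_pos[OF Q0D False] .
    have eQ: "emeasure M Q0 = ennreal (measure M Q0)" by (rule em)
    have avgQ: "avg M Q0 w * measure M Q0 = wQ" unfolding avg_def wQ_def using mQp by simp
    define I where "I = (\<integral>\<^sup>+ x\<in>Q0. maximal_fn M D w x \<partial>M)"
    have VI: "emeasure V Q0 = I"
      unfolding V_def I_def by (rule emeasure_density[OF maximal_meas Q0_sets])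
    have ne: "emeasure M Q0 \<noteq> 0" "emeasure M Q0 \<noteq> top" using mQp eQ by auto
    have "I = I / emeasure M Q0 * emeasure M Q0"
    proof -
      have "emeasure M Q0 / emeasure M Q0 = 1"
        using ne by (intro ennreal_divide_self) (auto simp: less_top[symmetric])
      then show ?thesis by (simp add: ennreal_divide_times)
    qed
    also have "\<dots> \<le> ennreal (A * avg M Q0 w) * emeasure M Q0"
      using assms(9) unfolding I_def by (rule mult_right_mono) simp
    also have "\<dots> = ennreal (A * wQ)"
      unfolding eQ avgQ[symmetric] by (subst ennreal_mult''[symmetric]) (auto simp: mult.assoc)
    finally have hypV: "emeasure V Q0 \<le> ennreal (A * (LINT x:Q0|M. w x))"
      unfolding VI wQ_def .
    have "ennreal wQ = ennreal (avg M Q0 w) * emeasure M Q0"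
      unfolding eQ avgQ[symmetric] by (rule ennreal_mult[OF avg_nonneg measure_nonneg])
    also have "\<dots> \<le> emeasure V Q0" by (rule lowV[OF Q0D Q0_sets order_refl])
    finally have "ennreal wQ \<le> ennreal (A * wQ)" using hypV unfolding wQ_def by simp
    then have AwQ: "0 \<le> A * wQ"
    proof (cases "0 \<le> A * wQ")
      case False
      then have "ennreal wQ = 0" using \<open>ennreal wQ \<le> ennreal (A * wQ)\<close> by (simp add: ennreal_neg)
      then have "wQ = 0" using int_nonneg[of Q0] unfolding wQ_def by simp
      then show ?thesis by simp
    qed
    have lnp: "0 \<le> ln (2 / \<alpha>)" using assms(4,5) by simp
    have RHS: "0 \<le> 2 * A * ln (2 / \<alpha>) * wQ"
    proof -
      have "0 \<le> 2 * ln (2 / \<alpha>) * (A * wQ)" using lnp AwQ by simp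
      then show ?thesis by (simp add: mult_ac)
    qed
    have mEQ: "measure M E \<le> measure M Q0" by (rule mmono[OF EQ0 Q0_sets])
    show ?thesis
    proof (cases "measure M E = 0 \<or> measure M E = measure M Q0")
      case True
      then have "ln (measure M Q0 / measure M E) = 0" using mQp by auto
      then show ?thesis using RHS unfolding wQ_def by simp
    next
      case False
      then have n1: "measure M E \<noteq> 0" and n2: "measure M E \<noteq> measure M Q0" by auto
      have "0 < measure M E" using n1 measure_nonneg[of M E] by (metis less_eq_real_def)
      moreover have "measure M E < measure M Q0" using n2 mEQ by (metis less_eq_real_def)
      ultimately
      show ?thesis using main[OF hypV] by blast
    qed
  qed
qed

end
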